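(* As formal power series in $x$, $$\sum_{n\ge 0}\left\langle {n \atop 3}\right\rangle_{\!3}x^n=\frac{x^2-7x^3+39x^4-336x^5+1844x^6-5545x^7+9697x^8-10404x^9+7532x^{10}-4558x^{11}+2435x^{12}-700x^{13}}{(1-x)^4(1-2x)^3(1-5x+5x^2)^2(1-10x+27x^2-20x^3)}.$$
   Context: A $c$-rook placement on an $n\times n$ board is a placement of $cn$ rooks on the cells, several rooks being allowed in the same cell, such that every row and every column contains exactly $c$ rooks (equivalently, an $n\times n$ matrix of nonnegative integers with all row and column sums equal to $c$). A drop is a rook lying strictly below the main diagonal, i.e.\ in a cell $(i,j)$ (row $i$, column $j$) with $i>j$, counted with multiplicity. The generalized Eulerian number $\left\langle {n \atop k}\right\rangle_{\!c}$ is the number of $c$-rook placements on the $n\times n$ board with exactly $k$ drops; for $n=0$ (empty board, only zero drops possible) $\left\langle {0 \atop k}\right\rangle_{\!c}=0$ when $k\ge1$. *)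

theory Defs
  imports "HOL-Computational_Algebra.Formal_Power_Series"
begin

definition rook_placements :: "nat \<Rightarrow> nat \<Rightarrow> (nat \<Rightarrow> nat \<Rightarrow> nat) set" where
  "rook_placements c n = {M. (\<forall>i j. (n \<le> i \<or> n \<le> j) \<longrightarrow> M i j = 0)
      \<and> (\<forall>i<n. (\<Sum>j<n. M i j) = c) \<and> (\<forall>j<n. (\<Sum>i<n. M i j) = c)}"

definition drops :: "nat \<Rightarrow> (nat \<Rightarrow> nat \<Rightarrow> nat) \<Rightarrow> nat" where
  "drops n M = (\<Sum>i<n. \<Sum>j<i. M i j)"

definition gen_eulerian :: "nat \<Rightarrow> nat \<Rightarrow> nat \<Rightarrow> nat" where
  "gen_eulerian c n k = card {M \<in> rook_placements c n. drops n M = k}"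

end

theory Submission
  imports Defs "HOL-Computational_Algebra.Polynomial_FPS"
begin

type_synonym mat = "nat \<Rightarrow> nat \<Rightarrow> nat"

definition TS :: "nat \<Rightarrow> nat list \<Rightarrow> nat list \<Rightarrow> nat \<Rightarrow> (mat \<times> mat \<times> mat) set" where
"TS m a b j = {(M,P,Q).
  (\<forall>i t. (m \<le> i \<or> m \<le> t) \<longrightarrow> M i t = 0) \<and>
  (\<forall>p t. (length a \<le> p \<or> m \<le> t) \<longrightarrow> P p t = 0) \<and>
  (\<forall>t q. (m \<le> t \<or> length b \<le> q) \<longrightarrow> Q t q = 0) \<and>
  (\<forall>p<length a. (\<Sum>t<m. P p t) = a!p) \<and>
  (\<forall>q<length b. (\<Sum>t<m. Q t q) = b!q) \<and>
  (\<forall>t<m. (\<Sum>q<length b. Q t q) + (\<Sum>s<m. M t s) = 3) \<and>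
  (\<forall>t<m. (\<Sum>p<length a. P p t) + (\<Sum>s<m. M s t) = 3) \<and>
  drops m M = j}"

definition Ch :: "nat list \<Rightarrow> nat list \<Rightarrow> nat \<Rightarrow> (nat list \<times> nat list \<times> nat) set" where
"Ch a b j = {(x,y,d). length x = length a \<and> (\<forall>p<length a. x!p \<le> a!p) \<and>
   length y = length b \<and> (\<forall>q<length b. y!q \<le> b!q) \<and>
   sum_list x + d \<le> 3 \<and> sum_list y + d \<le> 3 \<and> 3 - d - sum_list x \<le> j}"

fun nxa :: "nat list \<Rightarrow> nat list \<times> nat list \<times> nat \<Rightarrow> nat list" where
 "nxa a (x,y,d) = map (\<lambda>p. a!p - x!p) [0..<length a] @ [3 - d - sum_list y]"
fun nxb :: "nat list \<Rightarrow> nat list \<times> nat list \<times> nat \<Rightarrow> nat list" where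
 "nxb b (x,y,d) = map (\<lambda>q. b!q - y!q) [0..<length b] @ [3 - d - sum_list x]"
fun nxj :: "nat \<Rightarrow> nat list \<times> nat list \<times> nat \<Rightarrow> nat" where
 "nxj j (x,y,d) = j - (3 - d - sum_list x)"

fun phi :: "nat \<Rightarrow> nat \<Rightarrow> mat \<times> mat \<times> mat \<Rightarrow> (nat list \<times> nat list \<times> nat) \<times> (mat \<times> mat \<times> mat)" where
 "phi la lb (M,P,Q) = ((map (\<lambda>p. P p 0) [0..<la], map (\<lambda>q. Q 0 q) [0..<lb], M 0 0),
   (\<lambda>i t. M (Suc i) (Suc t),
    \<lambda>p t. if p < la then P p (Suc t) else if p = la then M 0 (Suc t) else 0,
    \<lambda>t q. if q < lb then Q (Suc t) q else if q = lb then M (Suc t) 0 else 0))"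

fun psi :: "nat \<Rightarrow> nat \<Rightarrow> (nat list \<times> nat list \<times> nat) \<times> (mat \<times> mat \<times> mat) \<Rightarrow> mat \<times> mat \<times> mat" where
 "psi la lb ((x,y,d),(M,P,Q)) =
   (\<lambda>i t. if i = 0 then (if t = 0 then d else P la (t-1)) else if t = 0 then Q (i-1) lb else M (i-1) (t-1),
    \<lambda>p t. if p < la then (if t = 0 then x!p else P p (t-1)) else 0,
    \<lambda>t q. if q < lb then (if t = 0 then y!q else Q (t-1) q) else 0)"

lemma sl: "sum_list (map f [0..<n]) = (\<Sum>i<n. f i)"
  by (induct n) auto

lemma drops_Suc: "drops (Suc m) M = (\<Sum>i<m. M (Suc i) 0) + drops m (\<lambda>i t. M (Suc i) (Suc t))"
proof -
  have "drops (Suc m) M = (\<Sum>i<Suc m. \<Sum>t<i. M i t)" by (simp add: drops_def)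
  also have "\<dots> = (\<Sum>i<m. \<Sum>t<Suc i. M (Suc i) t)"
    by (subst sum.lessThan_Suc_shift) simp
  also have "\<dots> = (\<Sum>i<m. M (Suc i) 0 + (\<Sum>t<i. M (Suc i) (Suc t)))"
    by (subst sum.lessThan_Suc_shift) simp
  finally show ?thesis by (simp add: sum.distrib drops_def)
qed

lemma sum_list_nth: "sum_list x = (\<Sum>p<length x. x!p)"
  by (simp add: sum_list_sum_nth atLeast0LessThan)

lemma TS_mem: "(M,P,Q) \<in> TS m a b j \<longleftrightarrow>
  (\<forall>i t. (m \<le> i \<or> m \<le> t) \<longrightarrow> M i t = 0) \<and>
  (\<forall>p t. (length a \<le> p \<or> m \<le> t) \<longrightarrow> P p t = 0) \<and>
  (\<forall>t q. (m \<le> t \<or> length b \<le> q) \<longrightarrow> Q t q = 0) \<and>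
  (\<forall>p<length a. (\<Sum>t<m. P p t) = a!p) \<and>
  (\<forall>q<length b. (\<Sum>t<m. Q t q) = b!q) \<and>
  (\<forall>t<m. (\<Sum>q<length b. Q t q) + (\<Sum>s<m. M t s) = 3) \<and>
  (\<forall>t<m. (\<Sum>p<length a. P p t) + (\<Sum>s<m. M s t) = 3) \<and>
  drops m M = j"
  unfolding TS_def by simp

lemma phi_in:
  assumes H: "(M,P,Q) \<in> TS (Suc m) a b j"
  shows "phi (length a) (length b) (M,P,Q) \<in> (SIGMA c:Ch a b j. TS m (nxa a c) (nxb b c) (nxj j c))"
proof -
  note H' = H[unfolded TS_mem]
  from H' have zM: "\<And>i t. Suc m \<le> i \<or> Suc m \<le> t \<Longrightarrow> M i t = 0" by blast
  from H' have zP: "\<And>p t. length a \<le> p \<or> Suc m \<le> t \<Longrightarrow> P p t = 0" by blast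
  from H' have zQ: "\<And>t q. Suc m \<le> t \<or> length b \<le> q \<Longrightarrow> Q t q = 0" by blast
  from H' have rP: "\<And>p. p < length a \<Longrightarrow> P p 0 + (\<Sum>t<m. P p (Suc t)) = a!p"
    by (simp del: sum.lessThan_Suc add: sum.lessThan_Suc_shift)
  from H' have cQ: "\<And>q. q < length b \<Longrightarrow> Q 0 q + (\<Sum>t<m. Q (Suc t) q) = b!q"
    by (simp del: sum.lessThan_Suc add: sum.lessThan_Suc_shift)
  from H' have row: "\<And>t. t < Suc m \<Longrightarrow> (\<Sum>q<length b. Q t q) + (M t 0 + (\<Sum>s<m. M t (Suc s))) = 3"
    by (simp del: sum.lessThan_Suc add: sum.lessThan_Suc_shift)
  from H' have col: "\<And>t. t < Suc m \<Longrightarrow> (\<Sum>p<length a. P p t) + (M 0 t + (\<Sum>s<m. M (Suc s) t)) = 3"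
    by (simp del: sum.lessThan_Suc add: sum.lessThan_Suc_shift)
  from H' have dr: "(\<Sum>i<m. M (Suc i) 0) + drops m (\<lambda>i t. M (Suc i) (Suc t)) = j"
    by (simp add: drops_Suc)
  define x where "x = map (\<lambda>p. P p 0) [0..<length a]"
  define y where "y = map (\<lambda>q. Q 0 q) [0..<length b]"
  define d where "d = M 0 0"
  have sx: "sum_list x = (\<Sum>p<length a. P p 0)" by (simp add: x_def sl)
  have sy: "sum_list y = (\<Sum>q<length b. Q 0 q)" by (simp add: y_def sl)
  have col0: "sum_list x + d + (\<Sum>s<m. M (Suc s) 0) = 3" using col[of 0] by (simp add: sx d_def)
  have row0: "sum_list y + d + (\<Sum>s<m. M 0 (Suc s)) = 3" using row[of 0] by (simp add: sy d_def)
  have e: "3 - d - sum_list x = (\<Sum>s<m. M (Suc s) 0)" using col0 by simp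
  have ey: "3 - d - sum_list y = (\<Sum>s<m. M 0 (Suc s))" using row0 by simp
  have lx: "\<forall>p<length a. x!p \<le> a!p"
  proof (intro allI impI)
    fix p assume p: "p < length a" show "x!p \<le> a!p" using rP[OF p] p by (simp add: x_def)
  qed
  have ly: "\<forall>q<length b. y!q \<le> b!q"
  proof (intro allI impI)
    fix q assume q: "q < length b" show "y!q \<le> b!q" using cQ[OF q] q by (simp add: y_def)
  qed
  have C: "(x,y,d) \<in> Ch a b j"
    unfolding Ch_def using col0 row0 dr e lx ly by (auto simp: x_def y_def)
  let ?M = "\<lambda>i t. M (Suc i) (Suc t)"
  let ?P = "\<lambda>p t. if p < length a then P p (Suc t) else if p = length a then M 0 (Suc t) else (0::nat)"
  let ?Q = "\<lambda>t q. if q < length b then Q (Suc t) q else if q = length b then M (Suc t) 0 else (0::nat)"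
  have "(?M,?P,?Q) \<in> TS m (nxa a (x,y,d)) (nxb b (x,y,d)) (nxj j (x,y,d))"
    unfolding TS_mem
  proof (intro conjI allI impI)
    fix i t assume "m \<le> i \<or> m \<le> t" thus "?M i t = 0" using zM by auto
  next
    fix p t assume "length (nxa a (x,y,d)) \<le> p \<or> m \<le> t" thus "?P p t = 0" using zP zM by auto
  next
    fix t q assume "m \<le> t \<or> length (nxb b (x,y,d)) \<le> q" thus "?Q t q = 0" using zQ zM by auto
  next
    fix p assume "p < length (nxa a (x,y,d))"
    hence "p < length a \<or> p = length a" by auto
    thus "(\<Sum>t<m. ?P p t) = nxa a (x,y,d) ! p"
    proof
      assume p: "p < length a"
      thus ?thesis using rP[OF p] by (simp add: nth_append x_def)
    next
      assume p: "p = length a"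
      thus ?thesis using ey by (simp add: nth_append)
    qed
  next
    fix q assume "q < length (nxb b (x,y,d))"
    hence "q < length b \<or> q = length b" by auto
    thus "(\<Sum>t<m. ?Q t q) = nxb b (x,y,d) ! q"
    proof
      assume q: "q < length b"
      thus ?thesis using cQ[OF q] by (simp add: nth_append y_def)
    next
      assume q: "q = length b"
      thus ?thesis using e by (simp add: nth_append)
    qed
  next
    fix t assume t: "t < m"
    have "(\<Sum>q<length (nxb b (x,y,d)). ?Q t q) = (\<Sum>q<length b. Q (Suc t) q) + M (Suc t) 0"
      by simp
    thus "(\<Sum>q<length (nxb b (x,y,d)). ?Q t q) + (\<Sum>s<m. ?M t s) = 3"
      using row[of "Suc t"] t by simp
  next
    fix t assume t: "t < m"
    have "(\<Sum>p<length (nxa a (x,y,d)). ?P p t) = (\<Sum>p<length a. P p (Suc t)) + M 0 (Suc t)"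
      by simp
    thus "(\<Sum>p<length (nxa a (x,y,d)). ?P p t) + (\<Sum>s<m. ?M s t) = 3"
      using col[of "Suc t"] t by simp
  next
    show "drops m ?M = nxj j (x,y,d)" using dr e by simp
  qed
  thus ?thesis using C by (simp add: x_def y_def d_def)
qed

lemma psi_in:
  assumes C: "(x,y,d) \<in> Ch a b j"
    and H: "(M,P,Q) \<in> TS m (nxa a (x,y,d)) (nxb b (x,y,d)) (nxj j (x,y,d))"
  shows "psi (length a) (length b) ((x,y,d),(M,P,Q)) \<in> TS (Suc m) a b j"
proof -
  note H' = H[unfolded TS_mem]
  from H' have zM: "\<And>i t. m \<le> i \<or> m \<le> t \<Longrightarrow> M i t = 0" by blast
  from H' have zP: "\<And>p t. Suc (length a) \<le> p \<or> m \<le> t \<Longrightarrow> P p t = 0" by auto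
  from H' have zQ: "\<And>t q. m \<le> t \<or> Suc (length b) \<le> q \<Longrightarrow> Q t q = 0" by auto
  from H' have rP: "\<And>p. p < length a \<Longrightarrow> (\<Sum>t<m. P p t) = a!p - x!p"
    by (auto simp: nth_append)
  from H' have rPl: "(\<Sum>t<m. P (length a) t) = 3 - d - sum_list y"
    by (auto simp: nth_append)
  from H' have cQ: "\<And>q. q < length b \<Longrightarrow> (\<Sum>t<m. Q t q) = b!q - y!q"
    by (auto simp: nth_append)
  from H' have cQl: "(\<Sum>t<m. Q t (length b)) = 3 - d - sum_list x"
    by (auto simp: nth_append)
  from H' have row: "\<And>t. t < m \<Longrightarrow> (\<Sum>q<length b. Q t q) + Q t (length b) + (\<Sum>s<m. M t s) = 3"
    by auto
  from H' have col: "\<And>t. t < m \<Longrightarrow> (\<Sum>p<length a. P p t) + P (length a) t + (\<Sum>s<m. M s t) = 3"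
    by auto
  from H' have dr: "drops m M = j - (3 - d - sum_list x)" by auto
  from C have lx: "length x = length a" and xa: "\<And>p. p < length a \<Longrightarrow> x!p \<le> a!p"
    and ly: "length y = length b" and yb: "\<And>q. q < length b \<Longrightarrow> y!q \<le> b!q"
    and sx: "sum_list x + d \<le> 3" and sy: "sum_list y + d \<le> 3" and ej: "3 - d - sum_list x \<le> j"
    unfolding Ch_def by auto
  have sx': "sum_list x = (\<Sum>p<length a. x!p)" using lx by (simp add: sum_list_nth)
  have sy': "sum_list y = (\<Sum>q<length b. y!q)" using ly by (simp add: sum_list_nth)
  let ?M = "\<lambda>i t. if i = 0 then (if t = 0 then d else P (length a) (t-1)) else if t = 0 then Q (i-1) (length b) else M (i-1) (t-1)"
  let ?P = "\<lambda>p t. if p < length a then (if t = 0 then x!p else P p (t-1)) else 0"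
  let ?Q = "\<lambda>t q. if q < length b then (if t = 0 then y!q else Q (t-1) q) else 0"
  have "(?M,?P,?Q) \<in> TS (Suc m) a b j"
    unfolding TS_mem
  proof (intro conjI allI impI)
    fix i t assume "Suc m \<le> i \<or> Suc m \<le> t" thus "?M i t = 0" by (auto intro!: zM zP zQ)
  next
    fix p t assume "length a \<le> p \<or> Suc m \<le> t" thus "?P p t = 0" using zP by auto
  next
    fix t q assume "Suc m \<le> t \<or> length b \<le> q" thus "?Q t q = 0" using zQ by auto
  next
    fix p assume p: "p < length a"
    show "(\<Sum>t<Suc m. ?P p t) = a!p" using p rP[OF p] xa[OF p]
      by (simp del: sum.lessThan_Suc add: sum.lessThan_Suc_shift)
  next
    fix q assume q: "q < length b"
    show "(\<Sum>t<Suc m. ?Q t q) = b!q" using q cQ[OF q] yb[OF q]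
      by (simp del: sum.lessThan_Suc add: sum.lessThan_Suc_shift)
  next
    fix t assume t: "t < Suc m"
    show "(\<Sum>q<length b. ?Q t q) + (\<Sum>s<Suc m. ?M t s) = 3"
    proof (cases t)
      case 0
      thus ?thesis using rPl sy sy'
        by (simp del: sum.lessThan_Suc add: sum.lessThan_Suc_shift)
    next
      case (Suc t')
      thus ?thesis using row[of t'] t
        by (simp del: sum.lessThan_Suc add: sum.lessThan_Suc_shift)
    qed
  next
    fix t assume t: "t < Suc m"
    show "(\<Sum>p<length a. ?P p t) + (\<Sum>s<Suc m. ?M s t) = 3"
    proof (cases t)
      case 0
      thus ?thesis using cQl sx sx'
        by (simp del: sum.lessThan_Suc add: sum.lessThan_Suc_shift)
    next
      case (Suc t')
      thus ?thesis using col[of t'] t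
        by (simp del: sum.lessThan_Suc add: sum.lessThan_Suc_shift)
    qed
  next
    show "drops (Suc m) ?M = j" using dr ej cQl by (simp add: drops_Suc)
  qed
  thus ?thesis by simp
qed

lemma psi_phi:
  assumes H: "(M,P,Q) \<in> TS (Suc m) a b j"
  shows "psi (length a) (length b) (phi (length a) (length b) (M,P,Q)) = (M,P,Q)"
proof -
  note H' = H[unfolded TS_mem]
  from H' have zP: "\<And>p t. \<not> p < length a \<Longrightarrow> P p t = 0" by auto
  from H' have zQ: "\<And>t q. \<not> q < length b \<Longrightarrow> Q t q = 0" by auto
  have 1: "(\<lambda>i t. if i = 0 then (if t = 0 then M 0 0 else M 0 (Suc (t-1))) else if t = 0 then M (Suc (i-1)) 0 else M (Suc (i-1)) (Suc (t-1))) = M"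
    by (intro ext) auto
  have 2: "(\<lambda>p t. if p < length a then (if t = 0 then P p 0 else P p (Suc (t-1))) else 0) = P"
    by (intro ext) (simp add: zP)
  have 3: "(\<lambda>t q. if q < length b then (if t = 0 then Q 0 q else Q (Suc (t-1)) q) else 0) = Q"
    by (intro ext) (simp add: zQ)
  have A: "fst (psi (length a) (length b) (phi (length a) (length b) (M,P,Q))) = M"
    unfolding fun_eq_iff by (intro allI, case_tac x; case_tac xa; simp)
  have B: "fst (snd (psi (length a) (length b) (phi (length a) (length b) (M,P,Q)))) = P"
    unfolding fun_eq_iff by (intro allI, case_tac xa; simp add: zP)
  have C: "snd (snd (psi (length a) (length b) (phi (length a) (length b) (M,P,Q)))) = Q"
    unfolding fun_eq_iff by (intro allI, case_tac x; simp add: zQ)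
  show ?thesis using A B C by (metis prod.collapse)
qed


lemma phi_psi:
  assumes C: "(x,y,d) \<in> Ch a b j"
    and H: "(M,P,Q) \<in> TS m (nxa a (x,y,d)) (nxb b (x,y,d)) (nxj j (x,y,d))"
  shows "phi (length a) (length b) (psi (length a) (length b) ((x,y,d),(M,P,Q))) = ((x,y,d),(M,P,Q))"
proof -
  have la: "length (nxa a (x,y,d)) = Suc (length a)" and lb: "length (nxb b (x,y,d)) = Suc (length b)" by simp_all
  have zP: "\<And>p t. Suc (length a) \<le> p \<Longrightarrow> P p t = 0" using H unfolding TS_mem la by blast
  have zQ: "\<And>t q. Suc (length b) \<le> q \<Longrightarrow> Q t q = 0" using H unfolding TS_mem lb by blast
  from C have lx: "length x = length a" and ly: "length y = length b"
    unfolding Ch_def by auto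
  have 1: "map (\<lambda>p. if p < length a then x!p else 0) [0..<length a] = x"
  proof -
    have "map (\<lambda>p. if p < length a then x!p else 0) [0..<length a] = map (\<lambda>p. x!p) [0..<length x]"
      using lx by (intro map_cong) auto
    thus ?thesis by (simp add: map_nth)
  qed
  have 2: "map (\<lambda>q. if q < length b then y!q else 0) [0..<length b] = y"
  proof -
    have "map (\<lambda>q. if q < length b then y!q else 0) [0..<length b] = map (\<lambda>q. y!q) [0..<length y]"
      using ly by (intro map_cong) auto
    thus ?thesis by (simp add: map_nth)
  qed
  let ?L = "phi (length a) (length b) (psi (length a) (length b) ((x,y,d),(M,P,Q)))"
  have A: "fst ?L = (x,y,d)" using 1 2 by (simp only: phi.simps psi.simps prod.case fst_conv simp_thms(6) if_True)
  have B: "fst (snd ?L) = M" by (simp add: fun_eq_iff)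
  have C: "fst (snd (snd ?L)) = P"
    unfolding fun_eq_iff by (intro allI, simp add: zP)
  have D: "snd (snd (snd ?L)) = Q"
    unfolding fun_eq_iff by (intro allI, simp add: zQ)
  show ?thesis using A B C D by (metis prod.collapse)
qed


declare nxa.simps[simp del] nxb.simps[simp del] nxj.simps[simp del]

lemma TS_step: "bij_betw (phi (length a) (length b)) (TS (Suc m) a b j)
   (SIGMA c:Ch a b j. TS m (nxa a c) (nxb b c) (nxj j c))"
proof (rule bij_betw_byWitness[where f'="psi (length a) (length b)"])
  show "\<forall>w\<in>TS (Suc m) a b j. psi (length a) (length b) (phi (length a) (length b) w) = w"
  proof
    fix w assume "w \<in> TS (Suc m) a b j"
    moreover obtain M P Q where "w = (M,P,Q)" by (cases w) auto
    ultimately show "psi (length a) (length b) (phi (length a) (length b) w) = w" using psi_phi by simp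
  qed
  show "\<forall>z\<in>(SIGMA c:Ch a b j. TS m (nxa a c) (nxb b c) (nxj j c)). phi (length a) (length b) (psi (length a) (length b) z) = z"
  proof
    fix z assume z: "z \<in> (SIGMA c:Ch a b j. TS m (nxa a c) (nxb b c) (nxj j c))"
    obtain x y d M P Q where zz: "z = ((x,y,d),(M,P,Q))" by (cases z) auto
    from z zz have C: "(x,y,d) \<in> Ch a b j" and T: "(M,P,Q) \<in> TS m (nxa a (x,y,d)) (nxb b (x,y,d)) (nxj j (x,y,d))" by simp_all
    show "phi (length a) (length b) (psi (length a) (length b) z) = z" unfolding zz by (rule phi_psi[OF C T])
  qed
  show "phi (length a) (length b) ` TS (Suc m) a b j \<subseteq> (SIGMA c:Ch a b j. TS m (nxa a c) (nxb b c) (nxj j c))"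
  proof
    fix u assume "u \<in> phi (length a) (length b) ` TS (Suc m) a b j"
    then obtain w where w: "w \<in> TS (Suc m) a b j" "u = phi (length a) (length b) w" by blast
    obtain M P Q where "w = (M,P,Q)" by (cases w) auto
    thus "u \<in> (SIGMA c:Ch a b j. TS m (nxa a c) (nxb b c) (nxj j c))" using w phi_in by simp
  qed
  show "psi (length a) (length b) ` (SIGMA c:Ch a b j. TS m (nxa a c) (nxb b c) (nxj j c)) \<subseteq> TS (Suc m) a b j"
  proof
    fix u assume "u \<in> psi (length a) (length b) ` (SIGMA c:Ch a b j. TS m (nxa a c) (nxb b c) (nxj j c))"
    then obtain z where z: "z \<in> (SIGMA c:Ch a b j. TS m (nxa a c) (nxb b c) (nxj j c))" "u = psi (length a) (length b) z" by blast
    obtain x y d M P Q where zz: "z = ((x,y,d),(M,P,Q))" by (cases z) auto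
    from z zz have C: "(x,y,d) \<in> Ch a b j" and T: "(M,P,Q) \<in> TS m (nxa a (x,y,d)) (nxb b (x,y,d)) (nxj j (x,y,d))" by simp_all
    show "u \<in> TS (Suc m) a b j" unfolding z(2) zz by (rule psi_in[OF C T])
  qed
qed

lemma sum_skip: "i \<le> n \<Longrightarrow> (\<Sum>p<Suc n. f p) = f i + (\<Sum>p<n. f (if p < i then p else Suc p))"
proof (induction n)
  case 0 thus ?case by simp
next
  case (Suc n)
  show ?case
  proof (cases "i = Suc n")
    case True
    thus ?thesis by (simp add: sum.lessThan_Suc add_ac)
  next
    case False
    hence "i \<le> n" using Suc.prems by simp
    from Suc.IH[OF this] show ?thesis using \<open>i \<le> n\<close> by (simp add: add_ac)
  qed
qed

lemma nth_del: "p < length a - 1 \<Longrightarrow> i < length a \<Longrightarrow> (take i a @ drop (Suc i) a)!p = a!(if p<i then p else Suc p)"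
  by (auto simp: nth_append min_def)

lemma TS_del_a:
  assumes i: "i < length a" and ai: "a!i = 0"
  shows "card (TS m a b j) = card (TS m (take i a @ drop (Suc i) a) b j)"
proof -
  let ?a = "take i a @ drop (Suc i) a"
  have la: "length ?a = length a - 1" using i by simp
  define f where "f = (\<lambda>(M::mat,P::mat,Q::mat). (M, \<lambda>p t. if p < i then P p t else P (Suc p) t, Q))"
  define g where "g = (\<lambda>(M::mat,P::mat,Q::mat). (M, \<lambda>p t. if p < i then P p t else if p = i then 0 else P (p-1) t, Q))"
  obtain n where n: "length a = Suc n" using i by (cases "length a") auto
  have "bij_betw f (TS m a b j) (TS m ?a b j)"
  proof (rule bij_betw_byWitness[where f'=g])
    show "\<forall>w\<in>TS m a b j. g (f w) = w"
    proof
      fix w assume w: "w \<in> TS m a b j"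
      obtain M P Q where ww: "w = (M,P,Q)" by (cases w) auto
      have P0: "P i t = 0" for t
      proof (cases "t < m")
        case True
        have "(\<Sum>t<m. P i t) = 0" using w ww i ai by (simp add: TS_mem)
        thus ?thesis using True by simp
      next
        case False thus ?thesis using w ww by (simp add: TS_mem)
      qed
      show "g (f w) = w" unfolding ww f_def g_def by (auto simp: fun_eq_iff P0)
    qed
    show "\<forall>w\<in>TS m ?a b j. f (g w) = w"
    proof
      fix w assume w: "w \<in> TS m ?a b j"
      obtain M P Q where ww: "w = (M,P,Q)" by (cases w) auto
      show "f (g w) = w" unfolding ww f_def g_def by (auto simp: fun_eq_iff)
    qed
    show "f ` TS m a b j \<subseteq> TS m ?a b j"
    proof
      fix u assume "u \<in> f ` TS m a b j"
      then obtain w where w: "w \<in> TS m a b j" "u = f w" by blast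
      obtain M P Q where ww: "w = (M,P,Q)" by (cases w) auto
      note H = w(1)[unfolded ww TS_mem]
      have P0: "P i t = 0" for t
      proof (cases "t < m")
        case True
        have "(\<Sum>t<m. P i t) = 0" using H i ai by simp
        thus ?thesis using True by simp
      next
        case False thus ?thesis using H by simp
      qed
      let ?P = "\<lambda>p t. if p < i then P p t else P (Suc p) t"
      have "(M, ?P, Q) \<in> TS m ?a b j"
        unfolding TS_mem
      proof (intro conjI allI impI)
        fix p t assume "length ?a \<le> p \<or> m \<le> t"
        thus "?P p t = 0" using H la n by auto
      next
        fix p assume p: "p < length ?a"
        show "(\<Sum>t<m. ?P p t) = ?a ! p" using p la H nth_del[of p a i] i
          by (cases "p < i") auto
      next
        fix t assume t: "t < m"
        have "(\<Sum>p<Suc n. P p t) = P i t + (\<Sum>p<n. P (if p < i then p else Suc p) t)"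
          using sum_skip[of i n "\<lambda>p. P p t"] i n by simp
        also have "\<dots> = (\<Sum>p<n. ?P p t)" by (simp add: P0) (rule sum.cong; simp)
        finally show "(\<Sum>p<length ?a. ?P p t) + (\<Sum>s<m. M s t) = 3"
          using H t n la by (metis diff_Suc_1)
      qed (use H in auto)
      thus "u \<in> TS m ?a b j" using w(2) ww f_def by simp
    qed
    show "g ` TS m ?a b j \<subseteq> TS m a b j"
    proof
      fix u assume "u \<in> g ` TS m ?a b j"
      then obtain w where w: "w \<in> TS m ?a b j" "u = g w" by blast
      obtain M P Q where ww: "w = (M,P,Q)" by (cases w) auto
      note H = w(1)[unfolded ww TS_mem]
      let ?P = "\<lambda>p t. if p < i then P p t else if p = i then 0 else P (p-1) t"
      have "(M, ?P, Q) \<in> TS m a b j"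
        unfolding TS_mem
      proof (intro conjI allI impI)
        fix p t assume "length a \<le> p \<or> m \<le> t"
        thus "?P p t = 0" using H la n by auto
      next
        fix p assume p: "p < length a"
        show "(\<Sum>t<m. ?P p t) = a ! p"
        proof (cases "p < i")
          case True thus ?thesis using H p la nth_del[of p a i] i n by auto
        next
          case False
          show ?thesis
          proof (cases "p = i")
            case True thus ?thesis using ai by simp
          next
            case False2: False
            hence pp: "p - 1 < length ?a" "\<not> p - 1 < i" using p \<open>\<not> p < i\<close> la by auto
            have "?a ! (p-1) = a ! p" using nth_del[of "p-1" a i] pp i la False2 \<open>\<not> p < i\<close> by auto
            thus ?thesis using H pp \<open>\<not> p < i\<close> False2 by auto
          qed
        qed
      next
        fix t assume t: "t < m"
        have "(\<Sum>p<Suc n. ?P p t) = ?P i t + (\<Sum>p<n. ?P (if p < i then p else Suc p) t)"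
          using sum_skip[of i n "\<lambda>p. ?P p t"] i n by simp
        also have "\<dots> = (\<Sum>p<n. P p t)" by simp (rule sum.cong; simp)
        finally show "(\<Sum>p<length a. ?P p t) + (\<Sum>s<m. M s t) = 3"
          using H t n la by (metis diff_Suc_1)
      qed (use H in auto)
      thus "u \<in> TS m a b j" using w(2) ww g_def by simp
    qed
  qed
  thus ?thesis by (rule bij_betw_same_card)
qed

lemma TS_del_b:
  assumes i: "i < length b" and ai: "b!i = 0"
  shows "card (TS m a b j) = card (TS m a (take i b @ drop (Suc i) b) j)"
proof -
  let ?b = "take i b @ drop (Suc i) b"
  have la: "length ?b = length b - 1" using i by simp
  define f where "f = (\<lambda>(M::mat,P::mat,Q::mat). (M, P, \<lambda>t p. if p < i then Q t p else Q t (Suc p)))"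
  define g where "g = (\<lambda>(M::mat,P::mat,Q::mat). (M, P, \<lambda>t p. if p < i then Q t p else if p = i then 0 else Q t (p-1)))"
  obtain n where n: "length b = Suc n" using i by (cases "length b") auto
  have "bij_betw f (TS m a b j) (TS m a ?b j)"
  proof (rule bij_betw_byWitness[where f'=g])
    show "\<forall>w\<in>TS m a b j. g (f w) = w"
    proof
      fix w assume w: "w \<in> TS m a b j"
      obtain M P Q where ww: "w = (M,P,Q)" by (cases w) auto
      have P0: "Q t i = 0" for t
      proof (cases "t < m")
        case True
        have "(\<Sum>t<m. Q t i) = 0" using w ww i ai by (simp add: TS_mem)
        thus ?thesis using True by simp
      next
        case False thus ?thesis using w ww by (simp add: TS_mem)
      qed
      show "g (f w) = w" unfolding ww f_def g_def by (auto simp: fun_eq_iff P0)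
    qed
    show "\<forall>w\<in>TS m a ?b j. f (g w) = w"
    proof
      fix w assume w: "w \<in> TS m a ?b j"
      obtain M P Q where ww: "w = (M,P,Q)" by (cases w) auto
      show "f (g w) = w" unfolding ww f_def g_def by (auto simp: fun_eq_iff)
    qed
    show "f ` TS m a b j \<subseteq> TS m a ?b j"
    proof
      fix u assume "u \<in> f ` TS m a b j"
      then obtain w where w: "w \<in> TS m a b j" "u = f w" by blast
      obtain M P Q where ww: "w = (M,P,Q)" by (cases w) auto
      note H = w(1)[unfolded ww TS_mem]
      have P0: "Q t i = 0" for t
      proof (cases "t < m")
        case True
        have "(\<Sum>t<m. Q t i) = 0" using H i ai by simp
        thus ?thesis using True by simp
      next
        case False thus ?thesis using H by simp
      qed
      let ?P = "\<lambda>t p. if p < i then Q t p else Q t (Suc p)"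
      have "(M, P, ?P) \<in> TS m a ?b j"
        unfolding TS_mem
      proof (intro conjI allI impI)
        fix t p assume "m \<le> t \<or> length ?b \<le> p"
        thus "?P t p = 0" using H la n by auto
      next
        fix p assume p: "p < length ?b"
        show "(\<Sum>t<m. ?P t p) = ?b ! p" using p la H nth_del[of p b i] i
          by (cases "p < i") auto
      next
        fix t assume t: "t < m"
        have "(\<Sum>p<Suc n. Q t p) = Q t i + (\<Sum>p<n. Q t (if p < i then p else Suc p))"
          using sum_skip[of i n "\<lambda>p. Q t p"] i n by simp
        also have "\<dots> = (\<Sum>p<n. ?P t p)" by (simp add: P0) (rule sum.cong; simp)
        finally show "(\<Sum>p<length ?b. ?P t p) + (\<Sum>s<m. M t s) = 3"
          using H t n la by (metis diff_Suc_1)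
      qed (use H in auto)
      thus "u \<in> TS m a ?b j" using w(2) ww f_def by simp
    qed
    show "g ` TS m a ?b j \<subseteq> TS m a b j"
    proof
      fix u assume "u \<in> g ` TS m a ?b j"
      then obtain w where w: "w \<in> TS m a ?b j" "u = g w" by blast
      obtain M P Q where ww: "w = (M,P,Q)" by (cases w) auto
      note H = w(1)[unfolded ww TS_mem]
      let ?P = "\<lambda>t p. if p < i then Q t p else if p = i then 0 else Q t (p-1)"
      have "(M, P, ?P) \<in> TS m a b j"
        unfolding TS_mem
      proof (intro conjI allI impI)
        fix t p assume "m \<le> t \<or> length b \<le> p"
        thus "?P t p = 0" using H la n by auto
      next
        fix p assume p: "p < length b"
        show "(\<Sum>t<m. ?P t p) = b ! p"
        proof (cases "p < i")
          case True thus ?thesis using H p la nth_del[of p b i] i n by auto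
        next
          case False
          show ?thesis
          proof (cases "p = i")
            case True thus ?thesis using ai by simp
          next
            case False2: False
            hence pp: "p - 1 < length ?b" "\<not> p - 1 < i" using p \<open>\<not> p < i\<close> la by auto
            have "?b ! (p-1) = b ! p" using nth_del[of "p-1" b i] pp i la False2 \<open>\<not> p < i\<close> by auto
            thus ?thesis using H pp \<open>\<not> p < i\<close> False2 by auto
          qed
        qed
      next
        fix t assume t: "t < m"
        have "(\<Sum>p<Suc n. ?P t p) = ?P t i + (\<Sum>p<n. ?P t (if p < i then p else Suc p))"
          using sum_skip[of i n "\<lambda>p. ?P t p"] i n by simp
        also have "\<dots> = (\<Sum>p<n. Q t p)" by simp (rule sum.cong; simp)
        finally show "(\<Sum>p<length b. ?P t p) + (\<Sum>s<m. M t s) = 3"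
          using H t n la by (metis diff_Suc_1)
      qed (use H in auto)
      thus "u \<in> TS m a b j" using w(2) ww g_def by simp
    qed
  qed
  thus ?thesis by (rule bij_betw_same_card)
qed

lemma TS_filter_a: "card (TS m a b j) = card (TS m (filter (\<lambda>v. 0<v) a) b j)"
proof (induction "length a" arbitrary: a rule: less_induct)
  case less
  show ?case
  proof (cases "\<forall>v\<in>set a. 0 < v")
    case True
    hence "filter (\<lambda>v. 0<v) a = a" by simp
    thus ?thesis by simp
  next
    case False
    then obtain i where i: "i < length a" "a!i = 0" by (auto simp: in_set_conv_nth)
    let ?a = "take i a @ drop (Suc i) a"
    have "a = take i a @ a!i # drop (Suc i) a" using i(1) by (simp add: id_take_nth_drop)
    hence fa: "filter (\<lambda>v. 0<v) a = filter (\<lambda>v. 0<v) ?a" using i(2)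
      by (metis (no_types, lifting) filter.simps(2) filter_append less_irrefl)
    have "length ?a < length a" using i by simp
    from less[OF this] TS_del_a[OF i] fa show ?thesis by simp
  qed
qed

lemma TS_filter_b: "card (TS m a b j) = card (TS m a (filter (\<lambda>v. 0<v) b) j)"
proof (induction "length b" arbitrary: b rule: less_induct)
  case less
  show ?case
  proof (cases "\<forall>v\<in>set b. 0 < v")
    case True
    hence "filter (\<lambda>v. 0<v) b = b" by simp
    thus ?thesis by simp
  next
    case False
    then obtain i where i: "i < length b" "b!i = 0" by (auto simp: in_set_conv_nth)
    let ?b = "take i b @ drop (Suc i) b"
    have "b = take i b @ b!i # drop (Suc i) b" using i(1) by (simp add: id_take_nth_drop)
    hence fb: "filter (\<lambda>v. 0<v) b = filter (\<lambda>v. 0<v) ?b" using i(2)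
      by (metis (no_types, lifting) filter.simps(2) filter_append less_irrefl)
    have "length ?b < length b" using i by simp
    from less[OF this] TS_del_b[OF i] fb show ?thesis by simp
  qed
qed

type_synonym st = "nat list \<times> nat list \<times> nat"

fun vecs :: "nat list \<Rightarrow> nat list list" where
 "vecs [] = [[]]"
| "vecs (a#as) = map (\<lambda>(v,w). v#w) (List.product [0..<Suc a] (vecs as))"

definition chlist :: "st \<Rightarrow> (nat list \<times> nat list \<times> nat) list" where
 "chlist s = (case s of (a,b,j) \<Rightarrow> filter (\<lambda>(x,y,d). sum_list x + d \<le> 3 \<and> sum_list y + d \<le> 3 \<and> 3 - d - sum_list x \<le> j)
     (List.product (vecs a) (List.product (vecs b) [0..<4])))"

definition nx :: "st \<Rightarrow> nat list \<times> nat list \<times> nat \<Rightarrow> st" where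
 "nx s c = (case s of (a,b,j) \<Rightarrow> (filter (\<lambda>v. 0<v) (nxa a c), filter (\<lambda>v. 0<v) (nxb b c), nxj j c))"

fun G :: "nat \<Rightarrow> st \<Rightarrow> int" where
  "G 0 (a,b,j) = (if (\<forall>v\<in>set a. v = 0) \<and> (\<forall>v\<in>set b. v = 0) \<and> j = 0 then 1 else 0)"
| "G (Suc m) s = sum_list (map (\<lambda>c. G m (nx s c)) (chlist s))"

lemma set_vecs: "set (vecs a) = {x. length x = length a \<and> (\<forall>p<length a. x!p \<le> a!p)}"
proof (induction a)
  case Nil thus ?case by auto
next
  case (Cons a as)
  show ?case
  proof (intro set_eqI iffI)
    fix x assume "x \<in> set (vecs (a#as))"
    then obtain v w where "x = v#w" "v \<le> a" "w \<in> set (vecs as)" by auto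
    thus "x \<in> {x. length x = length (a#as) \<and> (\<forall>p<length (a#as). x!p \<le> (a#as)!p)}"
      using Cons.IH by (auto simp: nth_Cons split: nat.split)
  next
    fix x assume x: "x \<in> {x. length x = length (a#as) \<and> (\<forall>p<length (a#as). x!p \<le> (a#as)!p)}"
    then obtain v w where vw: "x = v#w" by (cases x) auto
    have "v \<le> a" using x vw by force
    moreover have "w \<in> set (vecs as)" using x vw Cons.IH by force
    ultimately show "x \<in> set (vecs (a#as))" using vw by force
  qed
qed

lemma distinct_vecs: "distinct (vecs a)"
proof (induction a)
  case Nil thus ?case by simp
next
  case (Cons a as)
  have "inj_on (\<lambda>(v,w). v#w) (set (List.product [0..<Suc a] (vecs as)))"
    by (auto simp: inj_on_def)
  thus ?case using Cons.IH by (simp add: distinct_map distinct_product)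
qed

lemma set_chlist: "set (chlist (a,b,j)) = Ch a b j"
  unfolding chlist_def Ch_def by (auto simp: set_vecs)

lemma distinct_chlist: "distinct (chlist s)"
  unfolding chlist_def by (auto simp: distinct_vecs distinct_product split: prod.split)

lemma TS_0: "TS 0 a b j = (if (\<forall>v\<in>set a. v = 0) \<and> (\<forall>v\<in>set b. v = 0) \<and> j = 0
   then {(\<lambda>_ _. 0, \<lambda>_ _. 0, \<lambda>_ _. 0)} else {})"
  by (auto simp: TS_def drops_def fun_eq_iff all_set_conv_all_nth)

lemma TS_G: "finite (TS m a b j) \<and> int (card (TS m a b j)) = G m (a,b,j)"
proof (induction m arbitrary: a b j)
  case 0 thus ?case by (simp add: TS_0)
next
  case (Suc m)
  have bij: "bij_betw (phi (length a) (length b)) (TS (Suc m) a b j)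
   (SIGMA c:Ch a b j. TS m (nxa a c) (nxb b c) (nxj j c))" by (rule TS_step)
  have fC: "finite (Ch a b j)" by (metis List.finite_set set_chlist)
  have fS: "finite (SIGMA c:Ch a b j. TS m (nxa a c) (nxb b c) (nxj j c))"
    using fC Suc.IH by auto
  have "int (card (TS (Suc m) a b j)) = int (card (SIGMA c:Ch a b j. TS m (nxa a c) (nxb b c) (nxj j c)))"
    using bij_betw_same_card[OF bij] by simp
  also have "\<dots> = (\<Sum>c\<in>Ch a b j. int (card (TS m (nxa a c) (nxb b c) (nxj j c))))"
    using fC Suc.IH by (simp add: card_SigmaI)
  also have "\<dots> = (\<Sum>c\<in>Ch a b j. G m (nx (a,b,j) c))"
  proof (rule sum.cong)
    fix c assume "c \<in> Ch a b j"
    have "card (TS m (nxa a c) (nxb b c) (nxj j c)) = card (TS m (filter (\<lambda>v. 0<v) (nxa a c)) (filter (\<lambda>v. 0<v) (nxb b c)) (nxj j c))"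
      using TS_filter_a TS_filter_b by metis
    thus "int (card (TS m (nxa a c) (nxb b c) (nxj j c))) = G m (nx (a,b,j) c)"
      using Suc.IH by (simp add: nx_def)
  qed simp
  also have "\<dots> = G (Suc m) (a,b,j)"
    using distinct_chlist[of "(a,b,j)"] by (simp add: set_chlist[symmetric] sum_list_distinct_conv_sum_set)
  finally show ?case using bij_betw_finite[OF bij] fS by simp
qed

lemma gen_TS: "gen_eulerian 3 n 3 = card (TS n [] [] 3)"
proof -
  let ?f = "\<lambda>M::mat. (M, (\<lambda>_ _. 0)::mat, (\<lambda>_ _. 0)::mat)"
  have "TS n [] [] 3 = ?f ` {M \<in> rook_placements 3 n. drops n M = 3}"
  proof (intro set_eqI iffI)
    fix w assume w: "w \<in> TS n [] [] 3"
    obtain M P Q where ww: "w = (M,P,Q)" by (cases w) auto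
    have "P = (\<lambda>_ _. 0)" "Q = (\<lambda>_ _. 0)" using w ww by (auto simp: TS_mem fun_eq_iff)
    moreover have "M \<in> rook_placements 3 n" "drops n M = 3" using w ww by (auto simp: TS_mem rook_placements_def)
    ultimately show "w \<in> ?f ` {M \<in> rook_placements 3 n. drops n M = 3}" using ww by auto
  next
    fix w assume "w \<in> ?f ` {M \<in> rook_placements 3 n. drops n M = 3}"
    thus "w \<in> TS n [] [] 3" by (auto simp: TS_mem rook_placements_def)
  qed
  moreover have "inj ?f" by (auto simp: inj_def)
  ultimately show ?thesis unfolding gen_eulerian_def by (simp add: card_image inj_on_subset)
qed

lemma gen_G: "int (gen_eulerian 3 n 3) = G n ([],[],3)"
  using gen_TS TS_G by simp

definition SL :: "st list" where "SL = [([],[],3), ([3],[3],0), ([2],[2],1), ([1],[1],2), ([2,1],[3],0), ([2],[2],0), ([1,2],[3],0), ([1,1],[2],0), ([1],[1],0), ([],[],0), ([2,1],[2,1],0), ([2],[1,1],0), ([1,2],[2,1],0), ([1,1],[2],1), ([1,1],[1,1],0), ([1],[1],1), ([3],[2,1],0), ([],[],1), ([1,2],[1,2],0), ([1,1],[1,1],1), ([3],[1,2],0), ([2],[1,1],1), ([],[],2), ([1,1,1],[3],0), ([1,1,1],[2,1],0), ([1,1,1],[1,2],0), ([2,1],[1,2],0), ([1,1,1],[1,1,1],0), ([1,2],[1,1,1],0), ([3],[1,1,1],0), ([2,1],[1,1,1],0)]"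

fun idx :: "st list \<Rightarrow> st \<Rightarrow> nat" where
  "idx [] t = 0" | "idx (s#ss) t = (if s = t then 0 else Suc (idx ss t))"

lemma idx: "t \<in> set xs \<Longrightarrow> idx xs t < length xs \<and> xs ! idx xs t = t"
  by (induct xs) auto

lemma closure: "\<forall>s\<in>set SL. \<forall>c\<in>set (chlist s). nx s c \<in> set SL"
  by code_simp

definition TL :: "nat list list" where "TL = map (\<lambda>s. map (\<lambda>c. idx SL (nx s c)) (chlist s)) SL"
lemma TLval: "TL = [[1,2,3,0], [1,4,5,6,7,8,1,5,8,9], [10,2,11,12,13,14,15,8,16,2,11,15,8,17], [18,19,3,7,15,20,21,3,5,15,22], [4,4,5,23,7,6,7,8,6,7,8,1,5,8,9], [5,7,8,5,8,9], [6,23,7,6,7,8,4,5,6,7,8,1,5,8,9], [7,7,8,7,8,5,8,9], [8,8,9], [9], [10,10,5,11,24,7,14,12,7,14,8,8,12,7,14,8,8,16,5,11,8,8,9], [11,14,8,8,11,8,8,9], [12,24,7,14,12,7,14,8,8,10,5,11,12,7,14,8,8,16,5,11,8,8,9], [24,13,14,12,13,14,15,8,12,13,14,15,8,16,2,11,15,8,17], [14,14,8,8,14,8,8,11,8,8,9], [14,15,8,11,15,8,17], [16,10,5,11,12,7,14,8,8,16,5,11,8,8,9], [8,17], [18,25,14,7,18,14,8,7,8,26,11,5,18,14,8,7,8,20,11,8,5,8,9], [27,19,14,14,28,19,14,15,14,15,8,28,19,14,15,14,15,8,29,21,11,15,11,15,8,17], [20,26,11,5,18,14,8,7,8,20,11,8,5,8,9],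 [30,21,11,11,28,19,14,15,14,15,8,29,21,11,15,11,15,8,17], [5,15,22], [23,23,7,23,7,6,7,8,23,7,6,7,8,6,7,8,1,5,8,9], [24,24,7,14,24,7,14,12,7,14,8,8,24,7,14,12,7,14,8,8,12,7,14,8,8,16,5,11,8,8,9], [25,25,14,7,25,14,7,18,14,8,7,8,25,14,7,18,14,8,7,8,18,14,8,7,8,20,11,8,5,8,9], [26,26,11,5,25,14,7,18,14,8,7,8,18,14,8,7,8,20,11,8,5,8,9], [27,27,14,14,14,27,14,14,14,28,14,14,8,14,8,8,27,14,14,14,28,14,14,8,14,8,8,28,14,14,8,14,8,8,29,11,11,8,11,8,8,9], [28,27,14,14,14,28,14,14,8,14,8,8,30,11,11,11,28,14,14,8,14,8,8,29,11,11,8,11,8,8,9], [29,30,11,11,11,28,14,14,8,14,8,8,29,11,11,8,11,8,8,9], [30,30,11,11,11,27,14,14,14,28,14,14,8,14,8,8,28,14,14,8,14,8,8,29,11,11,8,11,8,8,9]]" unfolding TL_def by code_simp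
definition stepL :: "int list \<Rightarrow> int list" where "stepL v = map (\<lambda>is. sum_list (map (\<lambda>i. v!i) is)) TL"
definition stepF :: "int list \<Rightarrow> int list" where "stepF v = (let x0 = v!0; x1 = v!1; x2 = v!2; x3 = v!3; x4 = v!4; x5 = v!5; x6 = v!6; x7 = v!7; x8 = v!8; x9 = v!9; x10 = v!10; x11 = v!11; x12 = v!12; x13 = v!13; x14 = v!14; x15 = v!15; x16 = v!16; x17 = v!17; x18 = v!18; x19 = v!19; x20 = v!20; x21 = v!21; x22 = v!22; x23 = v!23; x24 = v!24; x25 = v!25; x26 = v!26; x27 = v!27; x28 = v!28; x29 = v!29; x30 = v!30 in [x1 + (x2 + (x3 + x0)), x1 + (x4 + (x5 + (x6 + (x7 + (x8 + (x1 + (x5 + (x8 + x9)))))))), x10 + (x2 + (x11 + (x12 + (x13 + (x14 + (x15 + (x8 + (x16 + (x2 + (x11 + (x15 + (x8 + x17)))))))))))), x18 + (x19 + (x3 + (x7 + (x15 + (x20 + (x21 + (x3 + (x5 + (x15 + x22))))))))), x4 + (x4 + (x5 + (x23 + (x7 + (x6 + (x7 + (x8 + (x6 + (x7 + (x8 + (x1 + (x5 + (x8 + x9))))))))))))), x5 + (x7 + (x8 + (x5 + (x8 + x9)))), x6 + (x23 + (x7 + (x6 + (x7 + (x8 + (x4 + (x5 + (x6 + (x7 + (x8 + (x1 + (x5 + (x8 + x9))))))))))))), x7 + (x7 + (x8 + (x7 + (x8 + (x5 + (x8 + x9)))))), x8 + (x8 + x9), x9, x10 + (x10 + (x5 + (x11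 + (x24 + (x7 + (x14 + (x12 + (x7 + (x14 + (x8 + (x8 + (x12 + (x7 + (x14 + (x8 + (x8 + (x16 + (x5 + (x11 + (x8 + (x8 + x9))))))))))))))))))))), x11 + (x14 + (x8 + (x8 + (x11 + (x8 + (x8 + x9)))))), x12 + (x24 + (x7 + (x14 + (x12 + (x7 + (x14 + (x8 + (x8 + (x10 + (x5 + (x11 + (x12 + (x7 + (x14 + (x8 + (x8 + (x16 + (x5 + (x11 + (x8 + (x8 + x9))))))))))))))))))))), x24 + (x13 + (x14 + (x12 + (x13 + (x14 + (x15 + (x8 + (x12 + (x13 + (x14 + (x15 + (x8 + (x16 + (x2 + (x11 + (x15 + (x8 + x17))))))))))))))))), x14 + (x14 + (x8 + (x8 + (x14 + (x8 + (x8 + (x11 + (x8 + (x8 + x9))))))))), x14 + (x15 + (x8 + (x11 + (x15 + (x8 + x17))))), x16 + (x10 + (x5 + (x11 + (x12 + (x7 + (x14 + (x8 + (x8 + (x16 + (x5 + (x11 + (x8 + (x8 + x9))))))))))))), x8 + x17, x18 + (x25 + (x14 + (x7 + (x18 + (x14 + (x8 + (x7 + (x8 + (x26 + (x11 + (x5 + (x18 + (x14 + (x8 + (x7 + (x8 + (x20 + (x11 + (x8 + (x5 + (x8 + x9))))))))))))))))))))), x27 + (x19 + (x14 + (x14 + (x28 + (x19 + (x14 + (x15 + (x14 + (x15 + (x8 + (x28 + (x19 + (x14 + (x15 + (x14 + (x15 + (x8 + (x29 + (x21 + (x11 + (x15 + (x11 + (x15 + (x8 + x17)))))))))))))))))))))))),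 x20 + (x26 + (x11 + (x5 + (x18 + (x14 + (x8 + (x7 + (x8 + (x20 + (x11 + (x8 + (x5 + (x8 + x9))))))))))))), x30 + (x21 + (x11 + (x11 + (x28 + (x19 + (x14 + (x15 + (x14 + (x15 + (x8 + (x29 + (x21 + (x11 + (x15 + (x11 + (x15 + (x8 + x17))))))))))))))))), x5 + (x15 + x22), x23 + (x23 + (x7 + (x23 + (x7 + (x6 + (x7 + (x8 + (x23 + (x7 + (x6 + (x7 + (x8 + (x6 + (x7 + (x8 + (x1 + (x5 + (x8 + x9)))))))))))))))))), x24 + (x24 + (x7 + (x14 + (x24 + (x7 + (x14 + (x12 + (x7 + (x14 + (x8 + (x8 + (x24 + (x7 + (x14 + (x12 + (x7 + (x14 + (x8 + (x8 + (x12 + (x7 + (x14 + (x8 + (x8 + (x16 + (x5 + (x11 + (x8 + (x8 + x9))))))))))))))))))))))))))))), x25 + (x25 + (x14 + (x7 + (x25 + (x14 + (x7 + (x18 + (x14 + (x8 + (x7 + (x8 + (x25 + (x14 + (x7 + (x18 + (x14 + (x8 + (x7 + (x8 + (x18 + (x14 + (x8 + (x7 + (x8 + (x20 + (x11 + (x8 + (x5 + (x8 + x9))))))))))))))))))))))))))))), x26 + (x26 + (x11 + (x5 + (x25 + (x14 + (x7 + (x18 + (x14 + (x8 + (x7 + (x8 + (x18 + (x14 + (x8 + (x7 + (x8 + (x20 + (x11 + (x8 + (x5 + (x8 + x9))))))))))))))))))))), x27 + (x27 + (x14 + (x14 + (x14 + (x27 + (x14 + (x14 + (x14 + (x28 +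 (x14 + (x14 + (x8 + (x14 + (x8 + (x8 + (x27 + (x14 + (x14 + (x14 + (x28 + (x14 + (x14 + (x8 + (x14 + (x8 + (x8 + (x28 + (x14 + (x14 + (x8 + (x14 + (x8 + (x8 + (x29 + (x11 + (x11 + (x8 + (x11 + (x8 + (x8 + x9)))))))))))))))))))))))))))))))))))))))), x28 + (x27 + (x14 + (x14 + (x14 + (x28 + (x14 + (x14 + (x8 + (x14 + (x8 + (x8 + (x30 + (x11 + (x11 + (x11 + (x28 + (x14 + (x14 + (x8 + (x14 + (x8 + (x8 + (x29 + (x11 + (x11 + (x8 + (x11 + (x8 + (x8 + x9))))))))))))))))))))))))))))), x29 + (x30 + (x11 + (x11 + (x11 + (x28 + (x14 + (x14 + (x8 + (x14 + (x8 + (x8 + (x29 + (x11 + (x11 + (x8 + (x11 + (x8 + (x8 + x9)))))))))))))))))), x30 + (x30 + (x11 + (x11 + (x11 + (x27 + (x14 + (x14 + (x14 + (x28 + (x14 + (x14 + (x8 + (x14 + (x8 + (x8 + (x28 + (x14 + (x14 + (x8 + (x14 + (x8 + (x8 + (x29 + (x11 + (x11 + (x8 + (x11 + (x8 + (x8 + x9)))))))))))))))))))))))))))))])"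
definition VS :: "int list list" where "VS = [[0,0,0,0,0,0,0,0,0,1,0,0,0,0,0,0,0,0,0,0,0,0,0,0,0,0,0,0,0,0,0], [0,1,0,0,1,1,1,1,1,1,1,1,1,0,1,0,1,0,1,0,1,0,0,1,1,1,1,1,1,1,1], [1,10,8,4,15,6,15,8,3,1,23,8,23,11,11,4,15,1,23,15,15,11,1,20,31,31,23,42,31,20,31], [23,77,130,95,136,27,136,40,7,1,242,40,242,196,60,34,136,4,242,296,136,196,11,202,361,361,242,540,361,202,361], [325,535,1302,1206,1019,109,1019,169,15,1,1942,169,1942,2046,263,186,1019,11,1942,3217,1019,2046,72,1589,3030,3030,1942,4730,3030,1589,3030], [3368,3526,10567,11358,6971,418,6971,662,31,1,13760,662,13760,16945,1049,845,6971,26,13760,27164,6971,16945,367,11132,21956,21956,13760,35021,21956,11132,21956], [28819,22555,76721,90693,45458,1561,45458,2498,63,1,91447,2498,91447,124312,3996,3489,45458,57,91447,201309,45458,124312,1630,73482,147670,147670,91447,238325,147670,73482,147670], [218788,141773,522259,656579,288675,5747,288675,9245,127,1,586895,9245,586895,850878,14865,13655,288675,120,586895,1385538,288675,850878,6680,469659,954007,954007,586895,1549971,954007,469659,954007], [1539399,881890,3418900,4474126,1805743,20994,1805743,33864,255,1,3693339,33864,3693339,5586671,54603,51794,1805743,247,3693339,9125247,1805743,5586671,26082,2948160,6026057,6026057,3693339,9828394,6026057,2948160,6026057], [10314315,5451629,21843568,29343780,11197368,76363,11197368,123352,511,1,22981804,123352,22981804,35751458,199204,192812,11197368,502,22981804,58498202,11197368,35751458,98870,18316958,37577689,37577689,22981804,61427414,37577689,18316958,37577689],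 [66953292,33575095,137432626,187800601,69082375,277101,69082375,447953,1023,1,142072438,447953,142072438,225138042,724031,709704,69082375,1013,142072438,368746649,69082375,225138042,368045,113130085,232592676,232592676,142072438,380721542,232592676,113130085,232592676], [425761614,206319142,856272949,1183153213,424935811,1004202,424935811,1624030,2047,1,874937002,1624030,874937002,1403419919,2626185,2594451,424935811,2036,874937002,2299917366,424935811,1403419919,1354850,696311472,1433435536,1433435536,874937002,2348182975,1433435536,696311472,1433435536], [2671506918,1266146435,5301844909,7378688508,2609260494,3636529,2609260494,5882434,4095,1,5376138747,5882434,5376138747,8692072172,9514868,9445247,2609260494,4083,5376138747,14249117589,2609260494,8692072172,4953503,4277129034,8811634860,8811634860,5376138747,14441517965,8811634860,4277129034,8811634860], [16618186770,7763977541,32697482481,45717328978,16005250091,13163683,16005250091,21296117,8191,1,32990704745,21296117,32990704745,53614013420,34451609,34300069,16005250091,8178,32990704745,87906883584,16005250091,53614013420,18035279,26241391567,54086151711,54086151711,32990704745,88667069541,54086151711,26241391567,54086151711], [102796975770,47586095130,201141306504,282072605013,98116609763,47639866,98116609763,77076608,16383,1,202290432707,77076608,202290432707,329839917935,124700091,124372424,98116609763,16369,202290432707,540870563755,98116609763,329839917935,65499031,160886267232,331690982855,331690982855,202290432707,543852240470,331690982855,160886267232,331690982855]]"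
definition DEN :: "int list" where "DEN = [1,-30,404,-3246,17423,-66214,184037,-380592,589248,-680496,577675,-349910,143100,-35400,4000]"
definition NUM :: "int list" where "NUM = [0,0,1,-7,39,-336,1844,-5545,9697,-10404,7532,-4558,2435,-700]"

lemma stepLF: "stepL v = stepF v" unfolding stepL_def TLval stepF_def Let_def by simp
lemma VSstep': "map stepF (butlast VS) = tl VS" by (simp add: stepF_def VS_def)
lemma VS0: "map (G 0) SL = VS!0" by (simp add: SL_def VS_def)
lemma annih: "\<forall>i<31. (\<Sum>l<15. DEN!l * (VS!(14-l))!i) = 0" by code_simp
lemma small: "\<forall>n<14. (\<Sum>i\<le>n. DEN!i * VS!(n-i)!0) = NUM!n" by code_simp
lemma lenSL: "length SL = 31" by (simp add: SL_def)
lemma lenVS: "length VS = 15" by (simp add: VS_def)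
lemma lenDEN: "length DEN = 15" by (simp add: DEN_def)
lemma lenNUM: "length NUM = 14" by (simp add: NUM_def)

lemma VSstep: "k < 14 \<Longrightarrow> stepL (VS!k) = VS!Suc k"
proof -
  assume k: "k < 14"
  have "stepL (VS!k) = stepF (VS!k)" by (rule stepLF)
  also have "\<dots> = map stepF (butlast VS) ! k" using k lenVS by (simp add: nth_butlast)
  also have "\<dots> = tl VS ! k" using VSstep' by simp
  also have "\<dots> = VS ! Suc k" using k lenVS by (simp add: nth_tl)
  finally show ?thesis .
qed

lemma Gstep: "map (G (Suc k)) SL = stepL (map (G k) SL)"
proof -
  have "stepL (map (G k) SL) = map (\<lambda>s. sum_list (map (\<lambda>c. map (G k) SL ! idx SL (nx s c)) (chlist s))) SL"
    unfolding stepL_def TL_def by (simp add: o_def)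
  also have "\<dots> = map (\<lambda>s. sum_list (map (\<lambda>c. G k (nx s c)) (chlist s))) SL"
  proof (intro map_cong refl arg_cong[where f=sum_list])
    fix s c assume s: "s \<in> set SL" and c: "c \<in> set (chlist s)"
    have "nx s c \<in> set SL" using closure s c by blast
    from idx[OF this] show "map (G k) SL ! idx SL (nx s c) = G k (nx s c)" by simp
  qed
  also have "\<dots> = map (G (Suc k)) SL" by simp
  finally show ?thesis by simp
qed

lemma Gvec: "map (G k) SL = (stepL ^^ k) (map (G 0) SL)"
proof (induction k)
  case 0 show ?case by simp
next
  case (Suc k) show ?case by (simp only: Gstep Suc.IH funpow.simps(2) o_apply)
qed

lemma VSk: "k \<le> 14 \<Longrightarrow> (stepL ^^ k) (map (G 0) SL) = VS!k"
proof (induction k)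
  case 0 thus ?case by (simp add: VS0)
next
  case (Suc k) thus ?case using VSstep[of k] by simp
qed

lemma Gval: "k \<le> 14 \<Longrightarrow> s \<in> set SL \<Longrightarrow> G k s = VS!k!idx SL s"
proof -
  assume k: "k \<le> 14" and s: "s \<in> set SL"
  have "G k s = map (G k) SL ! idx SL s" using idx[OF s] by simp
  thus ?thesis using Gvec[of k] VSk[OF k] by simp
qed

lemma sum_swap_list: "(\<Sum>l\<in>I. k l * sum_list (map (f l) xs)) = sum_list (map (\<lambda>x. \<Sum>l\<in>I. k l * f l x) xs)"
  for k :: "nat \<Rightarrow> int"
  by (induct xs) (simp_all add: sum.distrib distrib_left)

lemma Grec: "s \<in> set SL \<Longrightarrow> (\<Sum>l<15. DEN!l * G (n + (14 - l)) s) = 0"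
proof (induction n arbitrary: s)
  case 0
  have "(\<Sum>l<15. DEN!l * G (0 + (14 - l)) s) = (\<Sum>l<15. DEN!l * (VS!(14-l))!idx SL s)"
    using Gval[OF _ 0] by (intro sum.cong) auto
  also have "\<dots> = 0" using annih idx[OF 0] lenSL by simp
  finally show ?case .
next
  case (Suc n)
  have "(\<Sum>l<15. DEN!l * G (Suc n + (14 - l)) s) =
        (\<Sum>l<15. DEN!l * sum_list (map (\<lambda>c. G (n + (14 - l)) (nx s c)) (chlist s)))"
    by (intro sum.cong) auto
  also have "\<dots> = sum_list (map (\<lambda>c. \<Sum>l<15. DEN!l * G (n + (14 - l)) (nx s c)) (chlist s))"
    by (rule sum_swap_list)
  also have "\<dots> = sum_list (map (\<lambda>c. 0) (chlist s))"
  proof (intro map_cong refl arg_cong[where f=sum_list])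
    fix c assume c: "c \<in> set (chlist s)"
    have "nx s c \<in> set SL" using closure Suc.prems c by blast
    thus "(\<Sum>l<15. DEN!l * G (n + (14 - l)) (nx s c)) = 0" by (rule Suc.IH)
  qed
  finally show ?case by simp
qed

unbundle fps_syntax

definition f :: "nat \<Rightarrow> int" where "f n = G n ([],[],3)"

lemma init_SL: "([],[],3) \<in> set SL" and idx_init: "idx SL ([],[],3) = 0"
  by (simp_all add: SL_def)

lemma fval: "n \<le> 14 \<Longrightarrow> f n = VS!n!0"
  using Gval[OF _ init_SL] idx_init by (simp add: f_def)

lemma frec: "(\<Sum>l<15. DEN!l * f (k + (14 - l))) = 0"
  using Grec[OF init_SL] by (simp add: f_def)

definition Dp :: "rat poly" where "Dp = (1 - [:0,1:])^4 * (1 - 2*[:0,1:])^3 * (1 - 5*[:0,1:] + 5*[:0,1:]^2)^2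
       * (1 - 10*[:0,1:] + 27*[:0,1:]^2 - 20*[:0,1:]^3)"
definition Np :: "rat poly" where "Np = monom 1 2 - monom 7 3 + monom 39 4 - monom 336 5 + monom 1844 6 - monom 5545 7
      + monom 9697 8 - monom 10404 9 + monom 7532 10 - monom 4558 11 + monom 2435 12
      - monom 700 13"

lemma Dcoeffs: "coeffs Dp = map of_int DEN"
  unfolding Dp_def DEN_def by code_simp

lemma Dfps: "((1 - fps_X)^4 * (1 - 2*fps_X)^3 * (1 - 5*fps_X + 5*fps_X^2)^2
       * (1 - 10*fps_X + 27*fps_X^2 - 20*fps_X^3) :: rat fps) = fps_of_poly Dp"
  unfolding Dp_def by (simp only: fps_of_poly_mult fps_of_poly_power fps_of_poly_diff fps_of_poly_add fps_of_poly_1 fps_of_poly_numeral fps_of_poly_fps_X)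

lemma Nfps: "((fps_X^2 - 7*fps_X^3 + 39*fps_X^4 - 336*fps_X^5 + 1844*fps_X^6 - 5545*fps_X^7
      + 9697*fps_X^8 - 10404*fps_X^9 + 7532*fps_X^10 - 4558*fps_X^11 + 2435*fps_X^12
      - 700*fps_X^13) :: rat fps) = fps_of_poly Np"
  unfolding Np_def by (simp only: fps_of_poly_diff fps_of_poly_add fps_of_poly_monom' fps_of_poly_monom fps_numeral_fps_const fps_const_1_eq_1 mult_1)

lemma coeffD: "coeff Dp i = (if i < 15 then of_int (DEN!i) else 0)"
  using lenDEN by (simp add: nth_default_coeffs_eq[symmetric] Dcoeffs nth_default_def)

lemma coeffN: "coeff Np i = (if i < 14 then of_int (NUM!i) else 0)"
proof (cases "i < 14")
  case True
  have "\<forall>i<14. coeff Np i = of_int (NUM!i)"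
    unfolding Np_def NUM_def by (simp add: coeff_monom less_Suc_eq numeral_eq_Suc)
  thus ?thesis using True by simp
next
  case False
  thus ?thesis unfolding Np_def by (simp add: coeff_monom)
qed


lemma prodDA: "fps_of_poly Dp * Abs_fps (\<lambda>n. of_int (f n)) = fps_of_poly Np"
proof (rule fps_ext)
  fix n
  have "(fps_of_poly Dp * Abs_fps (\<lambda>n. of_int (f n))) $ n = (\<Sum>i=0..n. coeff Dp i * of_int (f (n - i)))"
    by (simp add: fps_mult_nth)
  also have "\<dots> = coeff Np n"
  proof (cases "n < 14")
    case True
    have "(\<Sum>i=0..n. coeff Dp i * of_int (f (n - i))) = (\<Sum>i\<le>n. of_int (DEN!i * VS!(n-i)!0) :: rat)"
      using True by (intro sum.cong) (auto simp: coeffD fval atLeast0AtMost)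
    also have "\<dots> = of_int (\<Sum>i\<le>n. DEN!i * VS!(n-i)!0)" by simp
    also have "\<dots> = of_int (NUM!n)" using small True by simp
    finally show ?thesis using True by (simp add: coeffN)
  next
    case False
    then obtain k where k: "n = k + 14" by (metis add.commute le_Suc_ex not_less)
    have "(\<Sum>i=0..n. coeff Dp i * of_int (f (n - i))) = (\<Sum>i<15. coeff Dp i * of_int (f (n - i)))"
      using k by (intro sum.mono_neutral_cong_right) (auto simp: coeffD)
    also have "\<dots> = (\<Sum>l<15. of_int (DEN!l * f (k + (14 - l))) :: rat)"
      using k by (intro sum.cong) (auto simp: coeffD)
    also have "\<dots> = of_int (\<Sum>l<15. DEN!l * f (k + (14 - l)))" by simp
    also have "\<dots> = 0" using frec by simp
    finally show ?thesis using False by (simp add: coeffN)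
  qed
  finally show "(fps_of_poly Dp * Abs_fps (\<lambda>n. of_int (f n))) $ n = fps_of_poly Np $ n" by simp
qed

theorem mainTheorem10:
  shows "(Abs_fps (\<lambda>n. of_nat (gen_eulerian 3 n 3)) :: rat fps) =
    (fps_X^2 - 7*fps_X^3 + 39*fps_X^4 - 336*fps_X^5 + 1844*fps_X^6 - 5545*fps_X^7
      + 9697*fps_X^8 - 10404*fps_X^9 + 7532*fps_X^10 - 4558*fps_X^11 + 2435*fps_X^12
      - 700*fps_X^13)
    / ((1 - fps_X)^4 * (1 - 2*fps_X)^3 * (1 - 5*fps_X + 5*fps_X^2)^2
       * (1 - 10*fps_X + 27*fps_X^2 - 20*fps_X^3))"
proof -
  have A: "(Abs_fps (\<lambda>n. of_nat (gen_eulerian 3 n 3)) :: rat fps) = Abs_fps (\<lambda>n. of_int (f n))"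
  proof (intro fps_ext)
    fix n
    have "(of_nat (gen_eulerian 3 n 3) :: rat) = of_int (int (gen_eulerian 3 n 3))" by simp
    thus "Abs_fps (\<lambda>n. of_nat (gen_eulerian 3 n 3)) $ n = (Abs_fps (\<lambda>n. of_int (f n)) :: rat fps) $ n"
      by (simp add: gen_G f_def)
  qed
  have D0: "fps_of_poly Dp \<noteq> 0"
  proof
    assume "fps_of_poly Dp = 0"
    hence "coeff Dp 0 = 0" by (metis fps_of_poly_nth fps_zero_nth)
    thus False by (simp add: coeffD DEN_def)
  qed
  have eq: "fps_of_poly Np / fps_of_poly Dp = Abs_fps (\<lambda>n. of_int (f n))"
    using prodDA[symmetric] D0 by simp
  show ?thesis by (simp only: A Dfps Nfps eq)
qed

end
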